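(* Let $\mathcal A$ be a (commutative or noncommutative, unital, nonzero) ring. Then $\mathcal A$ as a $\mathbb Z$-algebra is strongly simple if and only if $\mathcal A\simeq\mathbb Z/p\mathbb Z$ for some prime $p$.
   Context: An additive subgroup $M$ of a ring $\mathcal A$ is a (two-sided) Mathieu subspace if whenever $a\in\mathcal A$ satisfies $a^m\in M$ for all $m\ge1$, then for all $b,c\in\mathcal A$ there is $N$ with $ba^mc\in M$ for all $m\ge N$. $\mathcal A$ is strongly simple (as a $\mathbb Z$-algebra) if its only Mathieu subspaces are $0$ and $\mathcal A$. *)

theory Defs
  imports "HOL-Number_Theory.Residues" "HOL-Algebra.QuotRing"
begin

definition additive_subgroup :: "('a::ring_1) set \<Rightarrow> bool" where
  "additive_subgroup M \<longleftrightarrow> 0 \<in> M \<and> (\<forall>x\<in>M. \<forall>y\<in>M. x + y \<in> M) \<and> (\<forall>x\<in>M. - x \<in> M)"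

text \<open>Two-sided Mathieu subspace (as a Z-algebra, i.e. an additive subgroup).\<close>
definition mathieu_subspace :: "('a::ring_1) set \<Rightarrow> bool" where
  "mathieu_subspace M \<longleftrightarrow> additive_subgroup M \<and>
     (\<forall>a. (\<forall>m::nat. m \<ge> 1 \<longrightarrow> a ^ m \<in> M) \<longrightarrow>
        (\<forall>b c. \<exists>N. \<forall>m\<ge>N. b * a ^ m * c \<in> M))"

definition strongly_simple :: "'a::ring_1 itself \<Rightarrow> bool" where
  "strongly_simple _ \<longleftrightarrow> (\<forall>M::'a set. mathieu_subspace M \<longrightarrow> M = {0} \<or> M = UNIV)"

definition type_ring :: "('a::ring_1) ring" where
  "type_ring = \<lparr>carrier = UNIV, monoid.mult = (*), one = 1, zero = 0, add = (+)\<rparr>"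

end

theory Submission
  imports Defs
begin

lemma subgroup_of_nat_mult:
  fixes M :: "'a::ring_1 set"
  assumes "additive_subgroup M" "x \<in> M"
  shows "of_nat n * x \<in> M"
  using assms by (induction n) (auto simp: additive_subgroup_def distrib_right)

lemma subgroup_of_int_mult:
  fixes M :: "'a::ring_1 set"
  assumes "additive_subgroup M" "x \<in> M"
  shows "of_int n * x \<in> M"
proof (cases "n \<ge> 0")
  case True
  then show ?thesis using subgroup_of_nat_mult[OF assms, of "nat n"] by simp
next
  case False
  have "of_nat (nat (-n)) * x \<in> M" using subgroup_of_nat_mult[OF assms] by blast
  then have "- (of_nat (nat (-n)) * x) \<in> M" using assms(1) unfolding additive_subgroup_def by blast
  moreover have "of_int n * x = - (of_nat (nat (-n)) * x)" using False by simp
  ultimately show ?thesis by metis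
qed

lemma rev_dir:
  assumes p: "prime (p::int)" and h: "h \<in> ring_iso (type_ring::'a::ring_1 ring) (residue_ring p)"
  shows "strongly_simple TYPE('a)"
proof -
  have p1: "p > 1" using p prime_gt_1_int by blast
  note E = ring_iso_memE[OF h, unfolded type_ring_def residue_ring_def, simplified]
  have hadd: "h (x + y) = (h x + h y) mod p" for x y using E(3) by simp
  have hin: "h x \<in> {0..p-1}" for x using E(1) by simp
  have h1: "h 1 = 1" using E(4) by simp
  have inj: "inj h" using E(5) by (simp add: bij_betw_def)
  have h0: "h 0 = 0"
  proof -
    have "h 0 = (h 0 + h 0) mod p" using hadd[of 0 0] by simp
    moreover have "h 0 mod p = h 0" using hin[of 0] by (simp add: mod_pos_pos_trivial)
    ultimately have "(h 0 + h 0) mod p = h 0 mod p" by simp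
    then have "p dvd h 0" by (simp add: mod_eq_dvd_iff)
    then have "h 0 mod p = 0" by simp
    then show ?thesis using \<open>h 0 mod p = h 0\<close> by simp
  qed
  have hnat: "h (of_nat n) = int n mod p" for n
  proof (induction n)
    case 0 then show ?case using h0 by simp
  next
    case (Suc n)
    have "h (of_nat (Suc n)) = h (of_nat n + 1)" by (simp add: add.commute)
    also have "\<dots> = (int n mod p + 1) mod p" using hadd Suc h1 by simp
    also have "\<dots> = int (Suc n) mod p" by (simp add: mod_simps add.commute)
    finally show ?case .
  qed
  have surj: "x = of_nat (nat (h x))" for x
  proof -
    have "h (of_nat (nat (h x))) = int (nat (h x)) mod p" by (rule hnat)
    also have "\<dots> = h x" using hin[of x] by (simp add: mod_pos_pos_trivial)
    finally have "h (of_nat (nat (h x))) = h x" .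
    from injD[OF inj this] show ?thesis by simp
  qed
  have natmod: "(of_nat a :: 'a) = of_nat b \<longleftrightarrow> int a mod p = int b mod p" for a b
    using injD[OF inj, of "of_nat a" "of_nat b"] hnat[of a] hnat[of b] by auto
  show ?thesis unfolding strongly_simple_def
  proof (intro allI impI)
    fix M :: "'a set" assume "mathieu_subspace M"
    then have sg: "additive_subgroup M" by (simp add: mathieu_subspace_def)
    show "M = {0} \<or> M = UNIV"
    proof (cases "M \<subseteq> {0}")
      case True then show ?thesis using sg by (auto simp: additive_subgroup_def)
    next
      case False
      then obtain x where x: "x \<in> M" "x \<noteq> 0" by auto
      define k where "k = nat (h x)"
      have xk: "x = of_nat k" using surj k_def by simp
      have "\<not> p dvd int k"
      proof
        assume "p dvd int k"
        then have "int k mod p = int 0 mod p" by simp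
        then show False using natmod xk x by (metis of_nat_0)
      qed
      then have "coprime p (int k)" by (rule prime_imp_coprime[OF p])
      then have "coprime (int k) p" by (simp add: coprime_commute)
      then obtain u v where uv: "u * int k + v * p = 1" by (metis bezout_int coprime_iff_gcd_eq_1)
      have "M = UNIV"
      proof
        show "UNIV \<subseteq> M"
        proof
          fix y :: 'a
          define j where "j = nat (h y)"
          have yj: "y = of_nat j" using surj j_def by simp
          define w where "w = nat ((int j * u) mod p)"
          have "int (w * k) mod p = int j mod p"
          proof -
            have "int (w * k) mod p = ((int j * u) mod p * int k) mod p" using p1 by (simp add: w_def)
            also have "\<dots> = (int j * (u * int k)) mod p" by (simp add: mod_simps ac_simps)
            also have "u * int k = 1 - v * p" using uv by simp
            also have "int j * (1 - v * p) = int j + (- (int j * v)) * p" by (simp add: algebra_simps)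
            also have "(int j + (- (int j * v)) * p) mod p = int j mod p" by (rule mod_mult_self1)
            finally show ?thesis .
          qed
          then have "(of_nat (w * k) :: 'a) = of_nat j" using natmod by blast
          then have "y = of_nat w * x" using yj xk by simp
          then show "y \<in> M" using subgroup_of_nat_mult[OF sg x(1)] by simp
        qed
      qed simp
      then show ?thesis by simp
    qed
  qed
qed

lemma shift_eq:
  fixes y :: "'a::ring_1"
  assumes H1: "of_int k1 * y^2 = of_int j1 * y" and H2: "of_int k2 * (y + of_int c)^2 = of_int j2 * (y + of_int c)"
  shows "of_int (k2*j1 + 2*c*k1*k2 - k1*j2) * y = of_int (c*k1*j2 - c*c*k1*k2)"
proof -
  have yc: "y * of_int c = of_int c * y" by (rule mult_of_int_commute[symmetric])
  have "(y + of_int c)^2 = y*y + y*of_int c + of_int c * y + of_int c * of_int c"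
    by (simp add: power2_eq_square distrib_left distrib_right add.assoc)
  also have "\<dots> = y^2 + of_int (2*c) * y + of_int (c*c)"
    unfolding yc by (simp only: power2_eq_square mult_2 of_int_add of_int_mult distrib_right add.assoc)
  finally have sq: "(y + of_int c)^2 = y^2 + of_int (2*c) * y + of_int (c*c)" .
  have E2: "of_int k2 * y^2 + of_int (k2*(2*c)) * y + of_int (k2*(c*c)) = of_int j2 * y + of_int (j2*c)"
    using H2 unfolding sq by (simp only: distrib_left mult.assoc[symmetric] of_int_mult)
  have "of_int k1 * (of_int k2 * y^2 + of_int (k2*(2*c)) * y + of_int (k2*(c*c))) = of_int k1 * (of_int j2 * y + of_int (j2*c))"
    using E2 by simp
  moreover have "of_int k1 * (of_int k2 * y^2) = of_int k2 * (of_int j1 * y)"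
    using H1 by (metis mult.assoc mult_of_int_commute)
  ultimately have "of_int k2 * (of_int j1 * y) + of_int k1 * (of_int (k2*(2*c)) * y + of_int (k2*(c*c))) = of_int k1 * (of_int j2 * y + of_int (j2*c))"
    by (simp only: distrib_left add.assoc)
  then have "of_int (k2*j1) * y + of_int (k1*(k2*(2*c))) * y + of_int (k1*(k2*(c*c))) = of_int (k1*j2) * y + of_int (k1*(j2*c))"
    by (simp only: distrib_left mult.assoc[symmetric] of_int_mult add.assoc)
  then have "of_int (k2*j1) * y + of_int (k1*(k2*(2*c))) * y - of_int (k1*j2) * y = of_int (k1*(j2*c)) - of_int (k1*(k2*(c*c)))"
    by (simp add: algebra_simps)
  then have "of_int (k2*j1 + k1*(k2*(2*c)) - k1*j2) * y = of_int (k1*(j2*c) - k1*(k2*(c*c)))"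
    by (simp only: of_int_add of_int_diff distrib_right left_diff_distrib)
  moreover have "k2*j1 + k1*(k2*(2*c)) - k1*j2 = k2*j1 + 2*c*k1*k2 - k1*j2" "k1*(j2*c) - k1*(k2*(c*c)) = c*k1*j2 - c*c*k1*k2"
    by (simp_all add: algebra_simps)
  ultimately show ?thesis by simp
qed

lemma ideal_mathieu:
  fixes I :: "'a::ring_1 set"
  assumes "additive_subgroup I" "\<And>x b. x \<in> I \<Longrightarrow> b * x \<in> I" "\<And>x b. x \<in> I \<Longrightarrow> x * b \<in> I"
  shows "mathieu_subspace I"
  unfolding mathieu_subspace_def
proof (intro conjI allI impI assms(1))
  fix a b c :: 'a assume "\<forall>m::nat. m \<ge> 1 \<longrightarrow> a ^ m \<in> I"
  then have "\<forall>m\<ge>1. b * a ^ m * c \<in> I" using assms(2,3) by blast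
  then show "\<exists>N. \<forall>m\<ge>N. b * a ^ m * c \<in> I" by blast
qed

lemma ss_inv:
  assumes SS: "strongly_simple TYPE('a::ring_1)"
  shows "(of_int k :: 'a) = 0 \<or> (\<exists>u::'a. of_int k * u = 1)"
proof -
  define I where "I = range (\<lambda>x::'a. of_int k * x)"
  have sg: "additive_subgroup I" unfolding additive_subgroup_def I_def
  proof (intro conjI ballI)
    have "(0::'a) = of_int k * 0" by simp
    then show "0 \<in> range (\<lambda>x::'a. of_int k * x)" by blast
  next
    fix x y assume "x \<in> range (\<lambda>x::'a. of_int k * x)" "y \<in> range (\<lambda>x::'a. of_int k * x)"
    then show "x + y \<in> range (\<lambda>x::'a. of_int k * x)" by (auto simp flip: distrib_left)
  next
    fix x assume "x \<in> range (\<lambda>x::'a. of_int k * x)"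
    then obtain z where "x = of_int k * z" by blast
    then have "- x = of_int k * (- z)" by simp
    then show "- x \<in> range (\<lambda>x::'a. of_int k * x)" by blast
  qed
  have "mathieu_subspace I"
  proof (rule ideal_mathieu[OF sg])
    fix x b assume "x \<in> I"
    then obtain z where z: "x = of_int k * z" by (auto simp: I_def)
    have "b * x = of_int k * (b * z)" unfolding z by (metis mult.assoc mult_of_int_commute)
    then show "b * x \<in> I" unfolding I_def by blast
    have "x * b = of_int k * (z * b)" unfolding z by (simp add: mult.assoc)
    then show "x * b \<in> I" unfolding I_def by blast
  qed
  then have "I = {0} \<or> I = UNIV" using SS by (simp add: strongly_simple_def)
  then show ?thesis
  proof
    assume "I = {0}" then have "of_int k * 1 \<in> {0::'a}" unfolding I_def by blast
    then show ?thesis by simp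
  next
    assume "I = UNIV" then have "(1::'a) \<in> I" by simp
    then show ?thesis unfolding I_def by auto
  qed
qed

lemma inv_central:
  fixes u z :: "'a::ring_1"
  assumes "of_int k * u = 1"
  shows "u * of_int k = 1" "u * z = z * u"
proof -
  show uk: "u * of_int k = 1" using assms by (metis mult_of_int_commute)
  have "u * z = u * z * (of_int k * u)" using assms by simp
  also have "\<dots> = u * (of_int k * z) * u" by (metis mult.assoc mult_of_int_commute)
  also have "\<dots> = z * u" using uk by (metis mult.assoc mult_1_left)
  finally show "u * z = z * u" .
qed

lemma ss_cancel:
  assumes SS: "strongly_simple TYPE('a::ring_1)" and k: "(of_int k :: 'a) \<noteq> 0"
    and eq: "of_int k * x = of_int k * (z::'a)"
  shows "x = z"
proof -
  obtain u :: 'a where u: "of_int k * u = 1" using ss_inv[OF SS, of k] k by blast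
  have "u * of_int k * x = u * of_int k * z" using eq by (simp add: mult.assoc)
  then show ?thesis using inv_central(1)[OF u] by simp
qed

lemma ss_cancel_int:
  assumes SS: "strongly_simple TYPE('a::ring_1)" and k: "(of_int k :: 'a) \<noteq> 0"
    and eq: "(of_int (k * n) :: 'a) = 0"
  shows "(of_int n :: 'a) = 0"
  using ss_cancel[OF SS k, of "of_int n" 0] eq by simp

lemma ss_nz_mult:
  assumes SS: "strongly_simple TYPE('a::ring_1)" and "(of_int a :: 'a) \<noteq> 0" "(of_int b :: 'a) \<noteq> 0"
  shows "(of_int (a*b) :: 'a) \<noteq> 0"
proof
  assume "(of_int (a*b) :: 'a) = 0"
  then have "(of_int b :: 'a) = 0" by (rule ss_cancel_int[OF SS assms(2)])
  with assms(3) show False by simp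
qed

lemma cyclic_mathieu:
  fixes y :: "'a::ring_1"
  assumes H: "\<And>k j. (of_int k * y)^2 = of_int j * y \<Longrightarrow> of_int k * y = 0"
  shows "mathieu_subspace (range (\<lambda>k. of_int k * y))"
  unfolding mathieu_subspace_def
proof (intro conjI allI impI)
  show "additive_subgroup (range (\<lambda>k. of_int k * y))" unfolding additive_subgroup_def
  proof (intro conjI ballI)
    have "(0::'a) = of_int 0 * y" by simp
    then show "0 \<in> range (\<lambda>k. of_int k * y)" by blast
  next
    fix x z assume "x \<in> range (\<lambda>k. of_int k * y)" "z \<in> range (\<lambda>k. of_int k * y)"
    then obtain a b where "x = of_int a * y" "z = of_int b * y" by auto
    then have "x + z = of_int (a+b) * y" by (simp add: distrib_right)
    then show "x + z \<in> range (\<lambda>k. of_int k * y)" by blast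
  next
    fix x assume "x \<in> range (\<lambda>k. of_int k * y)"
    then obtain a where "x = of_int a * y" by auto
    then have "- x = of_int (-a) * y" by simp
    then show "- x \<in> range (\<lambda>k. of_int k * y)" by blast
  qed
next
  fix a b c :: 'a assume A: "\<forall>m::nat. m \<ge> 1 \<longrightarrow> a ^ m \<in> range (\<lambda>k. of_int k * y)"
  obtain k where k: "a = of_int k * y" using A[rule_format, of 1] by auto
  obtain j where j: "a^2 = of_int j * y" using A[rule_format, of 2] by auto
  have "a = 0" using H[of k j] j k by simp
  then have "\<forall>m\<ge>1. b * a ^ m * c = of_int 0 * y" by (simp add: power_0_left)
  then have "\<forall>m\<ge>1. b * a ^ m * c \<in> range (\<lambda>k. of_int k * y)" by blast
  then show "\<exists>N. \<forall>m\<ge>N. b * a ^ m * c \<in> range (\<lambda>k. of_int k * y)" by blast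
qed

lemma ss_quad:
  assumes SS: "strongly_simple TYPE('a::ring_1)"
  shows "\<exists>k j. (of_int k :: 'a) \<noteq> 0 \<and> of_int k * y^2 = of_int j * (y::'a)"
proof (cases "y = 0")
  case True then show ?thesis by (intro exI[of _ 1] exI[of _ 0]) simp
next
  case False
  have "\<exists>k j. (of_int k * y)^2 = of_int j * y \<and> of_int k * y \<noteq> 0"
  proof (rule ccontr)
    assume nt: "\<not> ?thesis"
    then have "mathieu_subspace (range (\<lambda>k. of_int k * y))" by (intro cyclic_mathieu) blast
    then have "range (\<lambda>k. of_int k * y) = {0} \<or> range (\<lambda>k. of_int k * y) = UNIV"
      using SS by (simp add: strongly_simple_def)
    moreover have "y = of_int 1 * y" by simp
    then have "y \<in> range (\<lambda>k. of_int k * y)" by blast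
    ultimately have "(1::'a) \<in> range (\<lambda>k. of_int k * y)" using False by auto
    then obtain n where n: "1 = of_int n * y" by auto
    then have "(of_int n * y)^2 = of_int n * y" unfolding n[symmetric] by simp
    then have "of_int n * y \<noteq> 0 \<longrightarrow> False" using nt by blast
    then show False using n by simp
  qed
  then obtain k j where kj: "(of_int k * y)^2 = of_int j * y" "of_int k * y \<noteq> 0" by blast
  have k0: "(of_int k :: 'a) \<noteq> 0" using kj(2) by auto
  have yk: "y * (of_int k * y) = of_int k * (y * y)" by (metis mult.assoc mult_of_int_commute)
  have "(of_int k * y)^2 = of_int (k*k) * y^2"
    by (simp add: power2_eq_square mult.assoc yk)
  then have "of_int (k*k) * y^2 = of_int j * y" using kj(1) by simp
  then show ?thesis using ss_nz_mult[OF SS k0 k0] by blast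
qed

lemma ss_F5:
  assumes SS: "strongly_simple TYPE('a::ring_1)"
  shows "(\<exists>a b. (of_int b :: 'a) \<noteq> 0 \<and> of_int b * y = of_int a) \<or> ((of_int 2 :: 'a) = 0 \<and> y^2 = (y::'a))"
proof (cases "\<exists>a b. (of_int b :: 'a) \<noteq> 0 \<and> of_int b * y = of_int a")
  case True then show ?thesis by (rule disjI1)
next
  case False
  note nF = False
  obtain k1 j1 where H1: "(of_int k1 :: 'a) \<noteq> 0" "of_int k1 * y^2 = of_int j1 * y" using ss_quad[OF SS] by blast
  obtain k2 j2 where H2: "(of_int k2 :: 'a) \<noteq> 0" "of_int k2 * (y + of_int 1)^2 = of_int j2 * (y + of_int 1)" using ss_quad[OF SS] by blast
  obtain k3 j3 where H3: "(of_int k3 :: 'a) \<noteq> 0" "of_int k3 * (y + of_int 2)^2 = of_int j3 * (y + of_int 2)" using ss_quad[OF SS] by blast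
  note e2 = shift_eq[OF H1(2) H2(2)]
  note e3 = shift_eq[OF H1(2) H3(2)]
  have c1: "(of_int (k2*j1 + 2*1*k1*k2 - k1*j2) :: 'a) = 0" using nF e2 by blast
  have c2: "(of_int (k3*j1 + 2*2*k1*k3 - k1*j3) :: 'a) = 0" using nF e3 by blast
  have r1: "(of_int (1*k1*j2 - 1*1*k1*k2) :: 'a) = 0" using e2 c1 by simp
  have r2: "(of_int (2*k1*j3 - 2*2*k1*k3) :: 'a) = 0" using e3 c2 by simp
  have "1*k1*j2 - 1*1*k1*k2 = k1 * (j2 - k2)" by (simp add: algebra_simps)
  then have "(of_int (k1 * (j2 - k2)) :: 'a) = 0" using r1 by simp
  then have d1: "(of_int (j2 - k2) :: 'a) = 0" by (rule ss_cancel_int[OF SS H1(1)])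
  have "k2*(j1+k1) = (k2*j1 + 2*1*k1*k2 - k1*j2) + k1*(j2-k2)" by (simp add: algebra_simps)
  then have "(of_int (k2*(j1+k1)) :: 'a) = of_int (k2*j1 + 2*1*k1*k2 - k1*j2) + of_int k1 * of_int (j2-k2)"
    by (simp only: of_int_add of_int_mult)
  then have "(of_int (k2*(j1+k1)) :: 'a) = 0" using c1 d1 by simp
  then have d2: "(of_int (j1+k1) :: 'a) = 0" by (rule ss_cancel_int[OF SS H2(1)])
  have "2*k1*j3 - 2*2*k1*k3 = k1 * (2*(j3 - 2*k3))" by (simp add: algebra_simps)
  then have "(of_int (k1 * (2*(j3 - 2*k3))) :: 'a) = 0" using r2 by simp
  then have d3: "(of_int (2*(j3 - 2*k3)) :: 'a) = 0" by (rule ss_cancel_int[OF SS H1(1)])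
  have "k1*(3*k3 - j3) = (k3*j1 + 2*2*k1*k3 - k1*j3) - k3*(j1+k1)" by (simp add: algebra_simps)
  then have "(of_int (k1*(3*k3 - j3)) :: 'a) = of_int (k3*j1 + 2*2*k1*k3 - k1*j3) - of_int k3 * of_int (j1+k1)"
    by (simp only: of_int_diff of_int_mult)
  then have "(of_int (k1*(3*k3 - j3)) :: 'a) = 0" using c2 d2 by simp
  then have d4: "(of_int (3*k3 - j3) :: 'a) = 0" by (rule ss_cancel_int[OF SS H1(1)])
  have "k3 * 2 = 2*(3*k3 - j3) + 2*(j3 - 2*k3)" by (simp add: algebra_simps)
  then have "(of_int (k3 * 2) :: 'a) = of_int 2 * of_int (3*k3 - j3) + of_int (2*(j3 - 2*k3))"
    by (simp only: of_int_add of_int_mult)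
  then have "(of_int (k3 * 2) :: 'a) = 0" unfolding d3 d4 by simp
  then have two: "(of_int 2 :: 'a) = 0" by (rule ss_cancel_int[OF SS H3(1)])
  have "(of_int j1 :: 'a) = of_int (j1 + k1) - of_int k1" by simp
  then have "(of_int j1 :: 'a) = - of_int k1" using d2 by (simp add: eq_neg_iff_add_eq_0)
  then have "of_int k1 * y^2 = of_int k1 * (- y)" using H1(2) by simp
  then have yy: "y^2 = - y" using ss_cancel[OF SS H1(1)] by blast
  have "y + y = of_int 2 * y" by (simp add: mult_2)
  then have "y + y = 0" using two by simp
  then have "- y = y" by (simp add: neg_eq_iff_add_eq_0)
  with yy have "(of_int 2 :: 'a) = 0 \<and> y^2 = y" using two by simp
  then show ?thesis by (rule disjI2)
qed

lemma ss_allF: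
  assumes SS: "strongly_simple TYPE('a::ring_1)"
  shows "\<exists>a b. (of_int b :: 'a) \<noteq> 0 \<and> of_int b * (y::'a) = of_int a"
proof (rule ccontr)
  assume nF: "\<not> ?thesis"
  have two: "(of_int 2 :: 'a) = 0" using ss_F5[OF SS, of y] nF by blast
  have modtwo: "(of_int n :: 'a) = of_int (n mod 2)" for n
  proof -
    have "n = 2 * (n div 2) + n mod 2" by simp
    then have "(of_int n :: 'a) = of_int (2 * (n div 2) + n mod 2)" by simp
    then have "(of_int n :: 'a) = of_int 2 * of_int (n div 2) + of_int (n mod 2)"
      by (simp only: of_int_add of_int_mult)
    then show ?thesis using two by simp
  qed
  have dbl: "w + w = 0" for w :: 'a
  proof -
    have "w + w = of_int 2 * w" by (simp add: mult_2)
    then show ?thesis using two by simp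
  qed
  have idem: "z^2 = z" for z :: 'a
  proof -
    from ss_F5[OF SS, of z] show ?thesis
    proof
      assume "\<exists>a b. (of_int b :: 'a) \<noteq> 0 \<and> of_int b * z = of_int a"
      then obtain a b where ab: "(of_int b :: 'a) \<noteq> 0" "of_int b * z = of_int a" by blast
      have "b mod 2 = 0 \<or> b mod 2 = 1" by presburger
      then have "b mod 2 = 1" using ab(1) modtwo[of b] by auto
      then have "(of_int b :: 'a) = 1" using modtwo[of b] by simp
      then have "z = of_int (a mod 2)" using ab(2) modtwo[of a] by simp
      moreover have "a mod 2 = 0 \<or> a mod 2 = 1" by presburger
      ultimately show ?thesis by (auto simp: power2_eq_square)
    qed simp
  qed
  have comm: "x * z = z * x" for x z :: 'a
  proof -
    have "(x+z)^2 = x + z" by (rule idem)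
    then have "x*x + x*z + z*x + z*z = x + z" by (simp add: power2_eq_square algebra_simps)
    then have "x*z + z*x = 0" using idem[of x] idem[of z] by (simp add: power2_eq_square algebra_simps)
    then have "x*z = - (z*x)" by (simp add: eq_neg_iff_add_eq_0)
    also have "\<dots> = z*x" using dbl[of "z*x"] by (simp add: neg_eq_iff_add_eq_0)
    finally show ?thesis .
  qed
  define I where "I = range (\<lambda>x::'a. x * y)"
  have sg: "additive_subgroup I" unfolding additive_subgroup_def I_def
  proof (intro conjI ballI)
    have "(0::'a) = 0 * y" by simp
    then show "0 \<in> range (\<lambda>x::'a. x * y)" by blast
  next
    fix x z assume "x \<in> range (\<lambda>x::'a. x * y)" "z \<in> range (\<lambda>x::'a. x * y)"
    then show "x + z \<in> range (\<lambda>x::'a. x * y)" by (auto simp flip: distrib_right)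
  next
    fix x assume "x \<in> range (\<lambda>x::'a. x * y)"
    then obtain z where "x = z * y" by blast
    then have "- x = (- z) * y" by simp
    then show "- x \<in> range (\<lambda>x::'a. x * y)" by blast
  qed
  have "mathieu_subspace I"
  proof (rule ideal_mathieu[OF sg])
    fix x b assume "x \<in> I"
    then obtain z where z: "x = z * y" by (auto simp: I_def)
    have "b * x = (b * z) * y" unfolding z by (simp add: mult.assoc)
    then show "b * x \<in> I" unfolding I_def by blast
    have "x * b = (z * b) * y" unfolding z using comm[of y b] by (simp add: mult.assoc)
    then show "x * b \<in> I" unfolding I_def by blast
  qed
  then have "I = {0} \<or> I = UNIV" using SS by (simp add: strongly_simple_def)
  moreover have "y \<noteq> 0"
  proof
    assume "y = 0"
    then have "(of_int 1 :: 'a) \<noteq> 0 \<and> of_int 1 * y = of_int 0" by simp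
    then show False using nF by blast
  qed
  moreover have "y = 1 * y" by simp
  then have "y \<in> I" unfolding I_def by blast
  ultimately have "(1::'a) \<in> I" by auto
  then obtain x where x: "1 = x * y" by (auto simp: I_def)
  have "y + 1 = x * y * (y + 1)" using x by simp
  also have "\<dots> = x * (y*y + y)" by (simp add: algebra_simps)
  also have "\<dots> = 0" using idem[of y] dbl[of y] by (simp add: power2_eq_square)
  finally have "y = - 1" by (simp add: eq_neg_iff_add_eq_0)
  then have "of_int 1 * y = of_int (-1)" by simp
  then have "(of_int 1 :: 'a) \<noteq> 0 \<and> of_int 1 * y = of_int (-1)" by simp
  then show False using nF by blast
qed

lemma ss_central:
  assumes SS: "strongly_simple TYPE('a::ring_1)"
  shows "a * z = z * (a::'a)"
proof -
  obtain a0 b0 where ab: "(of_int b0 :: 'a) \<noteq> 0" "of_int b0 * a = of_int a0" using ss_allF[OF SS] by blast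
  obtain u :: 'a where u: "of_int b0 * u = 1" using ss_inv[OF SS, of b0] ab(1) by blast
  have "a = u * of_int b0 * a" using inv_central(1)[OF u] by simp
  also have "\<dots> = u * of_int a0" using ab(2) by (simp add: mult.assoc)
  finally have a: "a = u * of_int a0" .
  show ?thesis unfolding a using inv_central(2)[OF u]
    by (metis mult.assoc mult_of_int_commute)
qed

lemma odd_decomp: "(t::int) \<noteq> 0 \<Longrightarrow> \<exists>e t'. odd t' \<and> t = 2^e * t'"
proof (induction "nat \<bar>t\<bar>" arbitrary: t rule: less_induct)
  case less
  show ?case
  proof (cases "odd t")
    case True then show ?thesis by (intro exI[of _ 0] exI[of _ t]) simp
  next
    case False
    then obtain s where s: "t = 2 * s" by blast
    with less.prems have "s \<noteq> 0" "nat \<bar>s\<bar> < nat \<bar>t\<bar>" by auto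
    then obtain e t' where "odd t'" "s = 2^e * t'" using less.hyps by blast
    then show ?thesis using s by (intro exI[of _ "Suc e"] exI[of _ t']) simp
  qed
qed

lemma ss_not_char0:
  assumes SS: "strongly_simple TYPE('a::ring_1)" and inj0: "\<And>n. (of_int n :: 'a) = 0 \<Longrightarrow> n = 0"
  shows False
proof -
  have ofinj: "(of_int x :: 'a) = of_int y \<Longrightarrow> x = y" for x y
    using inj0[of "x - y"] by simp
  define M where "M = {x::'a. \<exists>\<alpha> \<beta>. odd \<beta> \<and> of_int \<beta> * x = of_int (2*\<alpha>)}"
  have sg: "additive_subgroup M" unfolding additive_subgroup_def
  proof (intro conjI ballI)
    show "0 \<in> M" unfolding M_def by (intro CollectI exI[of _ 0] exI[of _ 1]) simp
  next
    fix x z assume "x \<in> M" "z \<in> M"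
    then obtain a1 b1 a2 b2 where h: "odd b1" "of_int b1 * x = (of_int (2*a1) :: 'a)"
      "odd b2" "of_int b2 * z = (of_int (2*a2) :: 'a)" unfolding M_def by blast
    have "of_int (b1*b2) * (x + z) = of_int b2 * (of_int b1 * x) + of_int b1 * (of_int b2 * z)"
      by (simp add: distrib_left mult.assoc[symmetric] mult.commute flip: of_int_mult)
    also have "\<dots> = of_int b2 * of_int (2*a1) + of_int b1 * (of_int (2*a2) :: 'a)" unfolding h(2) h(4) by (rule refl)
    also have "\<dots> = of_int (b2*(2*a1) + b1*(2*a2))" by (simp only: of_int_add of_int_mult)
    also have "\<dots> = (of_int (2*(b2*a1 + b1*a2)) :: 'a)" by (rule arg_cong[where f=of_int]) (simp add: algebra_simps)
    finally have "of_int (b1*b2) * (x + z) = (of_int (2*(b2*a1 + b1*a2)) :: 'a)" .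
    moreover have "odd (b1*b2)" using h by simp
    ultimately show "x + z \<in> M" unfolding M_def by blast
  next
    fix x assume "x \<in> M"
    then obtain a1 b1 where h: "odd b1" "of_int b1 * x = (of_int (2*a1) :: 'a)" unfolding M_def by blast
    then have "of_int b1 * (-x) = (of_int (2*(-a1)) :: 'a)" by simp
    then show "- x \<in> M" unfolding M_def using h by blast
  qed
  have "mathieu_subspace M" unfolding mathieu_subspace_def
  proof (intro conjI allI impI sg)
    fix a b c :: 'a assume A: "\<forall>m::nat. m \<ge> 1 \<longrightarrow> a ^ m \<in> M"
    obtain \<alpha> \<beta> where ab: "odd \<beta>" "of_int \<beta> * a = (of_int (2*\<alpha>) :: 'a)"
      using A[rule_format, of 1] unfolding M_def by auto
    obtain s t where st: "(of_int t :: 'a) \<noteq> 0" "of_int t * (b*c) = of_int s" using ss_allF[OF SS] by blast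
    have "t \<noteq> 0" using st(1) by auto
    then obtain e t' where et: "odd t'" "t = 2^e * t'" using odd_decomp by blast
    have pw: "of_int (\<beta>^m) * a^m = (of_int ((2*\<alpha>)^m) :: 'a)" for m
    proof (induction m)
      case 0 then show ?case by simp
    next
      case (Suc m)
      have "of_int (\<beta>^Suc m) * a^Suc m = of_int \<beta> * (of_int (\<beta>^m) * a^m) * a"
        by (simp add: mult.assoc power_commutes)
      also have "\<dots> = of_int ((2*\<alpha>)^m) * (of_int \<beta> * a)"
        unfolding Suc by (metis mult.assoc mult_of_int_commute)
      also have "\<dots> = of_int ((2*\<alpha>)^Suc m)" unfolding ab(2) by (simp only: power_Suc2 of_int_mult)
      finally show ?case .
    qed
    have "\<forall>m\<ge>Suc e. b * a ^ m * c \<in> M"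
    proof (intro allI impI)
      fix m assume m: "m \<ge> Suc e"
      define x where "x = b * a^m * c"
      have x: "x = a^m * (b*c)" unfolding x_def using ss_central[OF SS, of b "a^m"] by (metis mult.assoc)
      have cm: "a^m * (of_int t * (b*c)) = of_int t * (a^m*(b*c))" by (metis mult.assoc mult_of_int_commute)
      have r: "of_int (\<beta>^m) * a^m * (of_int t * (b*c)) = of_int (\<beta>^m * t) * x"
        unfolding x using cm by (simp add: mult.assoc)
      have l: "of_int (2^e) * (of_int (\<beta>^m * t') * x) = of_int (2^e * (\<beta>^m * t')) * (x::'a)"
        by (simp add: mult.assoc)
      have ii: "\<beta>^m * t = 2^e * (\<beta>^m * t')" using et(2) by (simp add: ac_simps)
      have ie: "(2*\<alpha>)^m * s = 2^e * (2 * (2^(m - Suc e) * \<alpha>^m * s))"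
      proof -
        have "(2::int)^m = 2^e * 2 * 2^(m - Suc e)" using m
          by (metis le_add_diff_inverse mult.assoc power_Suc2 power_add)
        then show ?thesis by (simp add: power_mult_distrib)
      qed
      have "of_int (2^e) * (of_int (\<beta>^m * t') * x) = of_int (\<beta>^m) * a^m * (of_int t * (b*c))"
        unfolding l r ii by simp
      also have "\<dots> = of_int ((2*\<alpha>)^m * s)" unfolding pw st(2) by simp
      also have "\<dots> = of_int (2^e) * (of_int (2 * (2^(m - Suc e) * \<alpha>^m * s)) :: 'a)"
        unfolding ie by (simp only: of_int_mult)
      finally have eq: "of_int (2^e) * (of_int (\<beta>^m * t') * x) = of_int (2^e) * (of_int (2 * (2^(m - Suc e) * \<alpha>^m * s)) :: 'a)" .
      have nz: "(of_int (2^e) :: 'a) \<noteq> 0"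
      proof
        assume "(of_int (2^e) :: 'a) = 0"
        then have "(2::int)^e = 0" by (rule inj0)
        then show False by simp
      qed
      have "of_int (\<beta>^m * t') * x = (of_int (2 * (2^(m - Suc e) * \<alpha>^m * s)) :: 'a)"
        by (rule ss_cancel[OF SS nz eq])
      moreover have "odd (\<beta>^m * t')" using ab(1) et(1) by simp
      ultimately show "b * a ^ m * c \<in> M" unfolding M_def x_def by blast
    qed
    then show "\<exists>N. \<forall>m\<ge>N. b * a ^ m * c \<in> M" by blast
  qed
  then have "M = {0} \<or> M = UNIV" using SS by (simp add: strongly_simple_def)
  moreover have "2 \<in> M" unfolding M_def by (intro CollectI exI[of _ 1] exI[of _ 1]) simp
  moreover have "(2::'a) \<noteq> 0"
  proof
    assume "(2::'a) = 0"
    then have "(of_int 2 :: 'a) = 0" by simp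
    then have "(2::int) = 0" by (rule inj0)
    then show False by simp
  qed
  ultimately have "1 \<in> M" by auto
  then obtain \<alpha> \<beta> where ab: "odd \<beta>" "of_int \<beta> * 1 = (of_int (2*\<alpha>) :: 'a)" unfolding M_def by blast
  then have "(of_int \<beta> :: 'a) = of_int (2*\<alpha>)" by (simp only: mult_1_right)
  then have "\<beta> = 2*\<alpha>" by (rule ofinj)
  then show False using ab(1) by simp
qed

lemma ss_charp:
  assumes SS: "strongly_simple TYPE('a::ring_1)" and n: "n \<noteq> 0" "(of_int n :: 'a) = 0"
  shows "\<exists>p::int. prime p \<and> (type_ring :: 'a ring) \<simeq> residue_ring p"
proof -
  define P where "P = (\<lambda>k::nat. k > 0 \<and> (of_nat k :: 'a) = 0)"
  have "P (nat \<bar>n\<bar>)" unfolding P_def using n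
    by (cases "n \<ge> 0") (auto simp: of_nat_nat)
  then have Pp: "P (LEAST k. P k)" by (rule LeastI)
  define q where "q = (LEAST k. P k)"
  have minq: "k < q \<Longrightarrow> \<not> P k" for k unfolding q_def by (rule not_less_Least)
  have q0: "q > 0" "(of_nat q :: 'a) = 0" using Pp unfolding P_def q_def by auto
  have q1: "q \<noteq> 1" using q0(2) by (metis of_nat_1 one_neq_zero)
  define p where "p = int q"
  have p1: "p > 1" using q0 q1 p_def by simp
  have ofp: "(of_int p :: 'a) = 0" using q0 p_def by simp
  have ker: "(of_int z :: 'a) = 0 \<longleftrightarrow> p dvd z" for z
  proof
    assume z: "(of_int z :: 'a) = 0"
    define r where "r = z mod p"
    have r: "0 \<le> r" "r < p" using p1 by (auto simp: r_def)
    have "z = p * (z div p) + r" by (simp add: r_def)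
    then have "(of_int z :: 'a) = of_int p * of_int (z div p) + of_int r" by (metis of_int_add of_int_mult)
    then have "(of_int r :: 'a) = 0" using z ofp by simp
    then have "(of_nat (nat r) :: 'a) = 0" using r by simp
    then have "\<not> (nat r > 0)" using minq[of "nat r"] r p_def unfolding P_def by auto
    then have "r = 0" using r by simp
    then show "p dvd z" using r_def by (simp add: dvd_eq_mod_eq_0)
  next
    assume "p dvd z"
    then obtain w where "z = p * w" by blast
    then show "(of_int z :: 'a) = 0" using ofp by simp
  qed
  have prime: "prime p" unfolding prime_int_iff
  proof (intro conjI allI impI p1)
    fix m assume m: "m \<ge> 0 \<and> m dvd p"
    then obtain w where w: "p = m * w" by blast
    show "m = 1 \<or> m = p"
    proof (rule ccontr)
      assume ne: "\<not> (m = 1 \<or> m = p)"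
      have "m \<noteq> 0" using w p1 by auto
      then have "m > 0" using m by simp
      have "0 < m * w" using w p1 by simp
      then have "w > 0" using \<open>m > 0\<close> by (simp add: zero_less_mult_iff)
      have "m \<le> p" using m p1 by (simp add: zdvd_imp_le)
      then have mlt: "1 < m" "m < p" using ne \<open>m > 0\<close> by auto
      have "w dvd p" using w by simp
      then have "w \<le> p" using p1 by (simp add: zdvd_imp_le)
      moreover have "w \<noteq> p" using w mlt p1 by auto
      moreover have "w \<noteq> 1" using w mlt by auto
      ultimately have wlt: "0 < w" "w < p" using \<open>w > 0\<close> by auto
      have "(of_int m :: 'a) \<noteq> 0" using ker[of m] mlt zdvd_imp_le[of p m] by auto
      moreover have "(of_int (m * w) :: 'a) = 0" using w ofp by simp
      ultimately have "(of_int w :: 'a) = 0" using ss_cancel_int[OF SS] by blast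
      then show False using ker[of w] wlt zdvd_imp_le[of p w] by auto
    qed
  qed
  have ofmod: "(of_int (z mod p) :: 'a) = of_int z" for z
  proof -
    have "z = p * (z div p) + z mod p" by simp
    then have "(of_int z :: 'a) = of_int p * of_int (z div p) + of_int (z mod p)" by (metis of_int_add of_int_mult)
    then show ?thesis using ofp by simp
  qed
  have allint: "\<exists>k. y = (of_int k :: 'a)" for y :: 'a
  proof -
    obtain a b where ab: "(of_int b :: 'a) \<noteq> 0" "of_int b * y = of_int a" using ss_allF[OF SS] by blast
    have "\<not> p dvd b" using ab(1) ker by blast
    then have "coprime p b" by (rule prime_imp_coprime[OF prime])
    then have "coprime b p" by (simp add: coprime_commute)
    then obtain u v where uv: "u * b + v * p = 1" by (metis bezout_int coprime_iff_gcd_eq_1)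
    have "u*b = 1 - v*p" using uv by simp
    then have "(of_int (u*b) :: 'a) = of_int (1 - v*p)" by simp
    also have "\<dots> = 1" using ofp by simp
    finally have "of_int u * of_int b = (1::'a)" by simp
    then have "y = of_int u * (of_int b * y)" by (metis mult.assoc mult_1_left)
    then show ?thesis using ab(2) by (metis of_int_mult)
  qed
  define g where "g = (\<lambda>k::int. (of_int k :: 'a))"
  have "g \<in> ring_iso (residue_ring p) (type_ring :: 'a ring)"
  proof (rule ring_iso_memI)
    fix x y assume "x \<in> carrier (residue_ring p)" "y \<in> carrier (residue_ring p)"
    show "g (x \<otimes>\<^bsub>residue_ring p\<^esub> y) = g x \<otimes>\<^bsub>type_ring\<^esub> g y"
      by (simp add: g_def residue_ring_def type_ring_def ofmod)
    show "g (x \<oplus>\<^bsub>residue_ring p\<^esub> y) = g x \<oplus>\<^bsub>type_ring\<^esub> g y"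
      by (simp add: g_def residue_ring_def type_ring_def ofmod)
  next
    show "g \<one>\<^bsub>residue_ring p\<^esub> = \<one>\<^bsub>type_ring\<^esub>"
      by (simp add: g_def residue_ring_def type_ring_def)
  next
    fix x show "g x \<in> carrier type_ring" by (simp add: type_ring_def)
  next
    show "bij_betw g (carrier (residue_ring p)) (carrier type_ring)"
      unfolding bij_betw_def
    proof
      show "inj_on g (carrier (residue_ring p))"
      proof (rule inj_onI)
        fix x y assume xy: "x \<in> carrier (residue_ring p)" "y \<in> carrier (residue_ring p)" "g x = g y"
        then have "(of_int (x - y) :: 'a) = 0" by (simp add: g_def)
        then have "p dvd x - y" using ker by blast
        then have "x mod p = y mod p" by (simp add: mod_eq_dvd_iff)
        moreover have "x mod p = x" "y mod p = y" using xy by (auto simp: residue_ring_def)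
        ultimately show "x = y" by simp
      qed
      show "g ` carrier (residue_ring p) = carrier type_ring"
      proof
        show "carrier type_ring \<subseteq> g ` carrier (residue_ring p)"
        proof
          fix y :: 'a assume "y \<in> carrier type_ring"
          obtain k where "y = of_int k" using allint by blast
          then have "y = g (k mod p)" using ofmod by (simp add: g_def)
          moreover have "k mod p \<in> carrier (residue_ring p)" using p1 by (simp add: residue_ring_def)
          ultimately show "y \<in> g ` carrier (residue_ring p)" by blast
        qed
      qed (simp add: type_ring_def)
    qed
  qed
  then have "residue_ring p \<simeq> (type_ring :: 'a ring)" unfolding is_ring_iso_def by blast
  moreover have "ring (residue_ring p)"
  proof -
    interpret R: residues p "residue_ring p" by (simp add: residues_def p1)
    show ?thesis using R.is_cring cring.axioms(1) by blast
  qed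
  ultimately have "(type_ring :: 'a ring) \<simeq> residue_ring p" using ring_iso_sym by blast
  then show ?thesis using prime by blast
qed

theorem corollary6p8:
  shows "strongly_simple TYPE('a::ring_1) \<longleftrightarrow>
         (\<exists>p::int. prime p \<and> (type_ring :: 'a ring) \<simeq> residue_ring p)"
proof
  assume SS: "strongly_simple TYPE('a::ring_1)"
  show "\<exists>p::int. prime p \<and> (type_ring :: 'a ring) \<simeq> residue_ring p"
  proof (cases "\<forall>n. (of_int n :: 'a) = 0 \<longrightarrow> n = 0")
    case True
    then have False using ss_not_char0[OF SS] by blast
    then show ?thesis ..
  next
    case False
    then obtain n where n: "n \<noteq> 0" "(of_int n :: 'a) = 0" by blast
    show ?thesis by (rule ss_charp[OF SS n])
  qed
next
  assume "\<exists>p::int. prime p \<and> (type_ring :: 'a ring) \<simeq> residue_ring p"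
  then obtain p :: int where p: "prime p" and iso: "(type_ring :: 'a ring) \<simeq> residue_ring p" by blast
  from iso obtain h where "h \<in> ring_iso (type_ring :: 'a ring) (residue_ring p)"
    unfolding is_ring_iso_def by blast
  then show "strongly_simple TYPE('a::ring_1)" by (rule rev_dir[OF p])
qed

end
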